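(* Let $k-1\le r\le 2k-2$ and suppose the $x$-direction parameters $(\alpha^x_s)_{s=1}^k$, $(a^x_s)_{s=0}^k$ satisfy the one-dimensional $k$-$r$-order orthogonality condition. Put $A^x_s=a^x_s-a^x_{s-1}$, $s=1,\dots,k$. Then the $k$-point quadrature rule with nodes $\alpha^x_1,\dots,\alpha^x_k$ and weights $A^x_1,\dots,A^x_k$ is exact on $P^{r+1}([-1,1])$: $$\int_{-1}^1 g(x)\,dx=\sum_{s=1}^k A^x_s\,g(\alpha^x_s)\qquad\forall g\in P^{r+1}([-1,1]).$$ The same holds in the $y$-direction with $A^y_t=a^y_t-a^y_{t-1}$ and nodes $\alpha^y_t$ when the $y$-direction parameters satisfy the condition.
   Context: $k\ge1$ an integer, $P^m([-1,1])$ the polynomials of degree $\le m$. Dual parameters $-1<\alpha^x_1<\dots<\alpha^x_k<1$; interpolation parameters $-1=a^x_0<a^x_1<\dots<a^x_k=1$ with $a^x_{s-1}<\alpha^x_s<a^x_s$; put $\alpha^x_0=-1$, $\alpha^x_{k+1}=1$ (analogously in $y$). For $k-1\le r\le 2k-2$, the $x$-direction parameters satisfy the one-dimensional $k$-$r$-order orthogonality condition if $\int_{-1}^1 g(\hat x)\big(w(\hat x)-(\hat\Pi_xw)(\hat x)\big)d\hat x=0$ for all $g\in P^r([-1,1])$ and all $w\in P^1([-1,1])$, where $(\hat\Pi_xw)(\hat x)=w(a^x_s)$ for $\hat x\in(\alpha^x_s,\alpha^x_{s+1})$, $0\le s\le k$. *)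

theory Defs
  imports "HOL-Analysis.Analysis" "HOL-Computational_Algebra.Polynomial"
begin

definition ext_alpha :: "nat \<Rightarrow> (nat \<Rightarrow> real) \<Rightarrow> nat \<Rightarrow> real" where
  "ext_alpha k \<alpha> s = (if s = 0 then -1 else if s = k + 1 then 1 else \<alpha> s)"

text \<open>The piecewise constant interpolant: (Pi w)(x) = w(a_s) for x in (alpha_s, alpha_(s+1)),
  0 <= s <= k (value 0 at the finitely many breakpoints, a null set).\<close>
definition Pi_interp :: "nat \<Rightarrow> (nat \<Rightarrow> real) \<Rightarrow> (nat \<Rightarrow> real) \<Rightarrow> (real \<Rightarrow> real) \<Rightarrow> real \<Rightarrow> real" where
  "Pi_interp k \<alpha> a w x =
     (\<Sum>s\<le>k. if ext_alpha k \<alpha> s < x \<and> x < ext_alpha k \<alpha> (Suc s) then w (a s) else 0)"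

definition orth_condition :: "nat \<Rightarrow> nat \<Rightarrow> (nat \<Rightarrow> real) \<Rightarrow> (nat \<Rightarrow> real) \<Rightarrow> bool" where
  "orth_condition k r \<alpha> a \<longleftrightarrow>
     (\<forall>g w :: real poly. degree g \<le> r \<longrightarrow> degree w \<le> 1 \<longrightarrow>
        integral {-1..1} (\<lambda>x. poly g x * (poly w x - Pi_interp k \<alpha> a (poly w) x)) = 0)"

end

theory Submission
  imports Defs
begin

theorem mainTheorem2:
  fixes k r :: nat and \<alpha> a :: "nat \<Rightarrow> real"
  assumes k: "k \<ge> 1"
    and alpha_range: "\<And>s. 1 \<le> s \<Longrightarrow> s \<le> k \<Longrightarrow> -1 < \<alpha> s \<and> \<alpha> s < 1"
    and alpha_mono: "\<And>s. 1 \<le> s \<Longrightarrow> s < k \<Longrightarrow> \<alpha> s < \<alpha> (Suc s)"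
    and a0: "a 0 = -1" and ak: "a k = 1"
    and a_mono: "\<And>s. s < k \<Longrightarrow> a s < a (Suc s)"
    and interlace: "\<And>s. 1 \<le> s \<Longrightarrow> s \<le> k \<Longrightarrow> a (s - 1) < \<alpha> s \<and> \<alpha> s < a s"
    and r_lo: "k - 1 \<le> r" and r_hi: "r \<le> 2 * k - 2"
    and orth: "orth_condition k r \<alpha> a"
  shows "\<forall>g :: real poly. degree g \<le> r + 1 \<longrightarrow>
           integral {-1..1} (poly g) = (\<Sum>s = 1..k. (a s - a (s - 1)) * poly g (\<alpha> s))"
proof (intro allI impI)
  fix h :: "real poly"
  assume dh: "degree h \<le> r + 1"
  define e where "e = ext_alpha k \<alpha>"
  have estep: "e j < e (Suc j)" if jk: "j \<le> k" for j
  proof -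
    consider "j = 0" | "j = k" "j \<noteq> 0" | "1 \<le> j" "j < k" using jk by (cases "j = 0"; cases "j = k") auto
    then show ?thesis
    proof cases
      case 1 then show ?thesis using alpha_range[of 1] k by (auto simp: e_def ext_alpha_def)
    next
      case 2 then show ?thesis using alpha_range[of k] k by (auto simp: e_def ext_alpha_def)
    next
      case 3 then show ?thesis using alpha_mono[of j] by (auto simp: e_def ext_alpha_def)
    qed
  qed
  have emono: "e i < e j" if "i < j" "j \<le> Suc k" for i j
    using that
  proof (induction j)
    case 0 then show ?case by simp
  next
    case (Suc j)
    show ?case
    proof (cases "i = j")
      case True then show ?thesis using estep[of j] Suc by simp
    next
      case False then have "e i < e j" using Suc by simp
      then show ?thesis using estep[of j] Suc by simp
    qed
  qed
  have emono': "e i \<le> e j" if "i \<le> j" "j \<le> Suc k" for i j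
    using emono[of i j] that by (cases "i = j") auto
  have p1: "poly [:0,1:] = (\<lambda>x::real. x)" by (auto simp: fun_eq_iff)
  define P where "P = Pi_interp k \<alpha> a (poly [:0,1:])"
  have Pval: "P x = a s" if "s \<le> k" "e s < x" "x < e (Suc s)" for s x
  proof -
    have "P x = (\<Sum>j\<le>k. if e j < x \<and> x < e (Suc j) then a j else 0)"
      by (simp add: P_def Pi_interp_def e_def p1)
    also have "\<dots> = (if e s < x \<and> x < e (Suc s) then a s else 0)"
    proof -
      have z: "\<forall>i\<in>{..k} - {s}. (if e i < x \<and> x < e (Suc i) then a i else 0) = 0"
      proof
        fix i assume i: "i \<in> {..k} - {s}"
        then have "i < s \<or> s < i" by auto
        then show "(if e i < x \<and> x < e (Suc i) then a i else 0) = 0"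
        proof
          assume "i < s" then have "e (Suc i) \<le> e s" using emono' that by simp
          then show ?thesis using that by auto
        next
          assume "s < i" then have "e (Suc s) \<le> e i" using emono' i by simp
          then show ?thesis using that by auto
        qed
      qed
      have "(\<Sum>j\<le>k. if e j < x \<and> x < e (Suc j) then a j else 0)
        = (if e s < x \<and> x < e (Suc s) then a s else 0) + (\<Sum>j\<in>{..k}-{s}. if e j < x \<and> x < e (Suc j) then a j else 0)"
        using that by (intro sum.remove) auto
      also have "(\<Sum>j\<in>{..k}-{s}. if e j < x \<and> x < e (Suc j) then a j else 0) = 0"
        using z by (intro sum.neutral) blast
      finally show ?thesis by simp
    qed
    finally show ?thesis using that by simp
  qed
  define F where "F x = poly (pderiv h) x * (x - P x) + poly h x" for x
  define T where "T s = poly h (e (Suc s)) * (e (Suc s) - a s) - poly h (e s) * (e s - a s)" for s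
  have seg: "(F has_integral T s) {e s..e (Suc s)}" if "s \<le> k" for s
  proof -
    have "(F has_integral ((\<lambda>x. poly h x * (x - a s)) (e (Suc s)) - (\<lambda>x. poly h x * (x - a s)) (e s))) {e s..e (Suc s)}"
    proof (rule fundamental_theorem_of_calculus_interior)
      show "e s \<le> e (Suc s)" using estep[OF that] by simp
      show "continuous_on {e s..e (Suc s)} (\<lambda>x. poly h x * (x - a s))"
        by (intro continuous_intros)
      fix x assume x: "x \<in> {e s<..<e (Suc s)}"
      have "((\<lambda>x. poly h x * (x - a s)) has_field_derivative
             poly (pderiv h) x * (x - a s) + poly h x * 1) (at x)"
        by (intro derivative_eq_intros poly_DERIV) auto
      moreover have "F x = poly (pderiv h) x * (x - a s) + poly h x * 1"
        using Pval[OF that] x by (simp add: F_def)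
      ultimately show "((\<lambda>x. poly h x * (x - a s)) has_vector_derivative F x) (at x)"
        by (simp add: has_real_derivative_iff_has_vector_derivative)
    qed
    then show ?thesis by (simp add: T_def)
  qed
  have comb: "(F has_integral (\<Sum>s<m. T s)) {e 0..e m}" if "m \<le> Suc k" for m
    using that
  proof (induction m)
    case 0 then show ?case using has_integral_null[of "e 0" "e 0" F] by simp
  next
    case (Suc m)
    have "(F has_integral (\<Sum>s<m. T s) + T m) {e 0..e (Suc m)}"
      by (rule has_integral_combine[of "e 0" "e m" "e (Suc m)"])
        (use Suc emono' seg in auto)
    then show ?case by simp
  qed
  have e0: "e 0 = -1" and ek: "e (Suc k) = 1" by (auto simp: e_def ext_alpha_def)
  have Fint: "(F has_integral (\<Sum>s<Suc k. T s)) {-1..1}"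
    using comb[of "Suc k"] e0 ek by simp
  have tele: "(\<Sum>s<Suc k. T s) = (\<Sum>s = 1..k. (a s - a (s - 1)) * poly h (\<alpha> s))"
  proof -
    have A: "(\<Sum>s<Suc k. poly h (e (Suc s)) * (e (Suc s) - a s))
        = (\<Sum>s=1..k. poly h (e s) * (e s - a (s - 1)))"
    proof -
      have "(\<Sum>s<Suc k. poly h (e (Suc s)) * (e (Suc s) - a s))
          = (\<Sum>s<k. poly h (e (Suc s)) * (e (Suc s) - a s))"
        using ek ak by simp
      also have "\<dots> = (\<Sum>s=1..k. poly h (e s) * (e s - a (s - 1)))"
        using sum.atLeast1_atMost_eq[of "\<lambda>s. poly h (e s) * (e s - a (s - 1))" k] by simp
      finally show ?thesis .
    qed
    have B: "(\<Sum>s<Suc k. poly h (e s) * (e s - a s))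
        = (\<Sum>s=1..k. poly h (e s) * (e s - a s))"
    proof -
      have "(\<Sum>s<Suc k. poly h (e s) * (e s - a s)) = (\<Sum>s\<le>k. poly h (e s) * (e s - a s))"
        by (simp add: lessThan_Suc_atMost)
      also have "\<dots> = poly h (e 0) * (e 0 - a 0) + (\<Sum>s=1..k. poly h (e s) * (e s - a s))"
        by (simp add: atMost_atLeast0 sum.atLeast_Suc_atMost)
      finally show ?thesis using e0 a0 by simp
    qed
    have "(\<Sum>s<Suc k. T s) = (\<Sum>s<Suc k. poly h (e (Suc s)) * (e (Suc s) - a s))
        - (\<Sum>s<Suc k. poly h (e s) * (e s - a s))"
      by (simp add: T_def sum_subtractf)
    also have "\<dots> = (\<Sum>s=1..k. poly h (e s) * (e s - a (s - 1)) - poly h (e s) * (e s - a s))"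
      using A B by (simp add: sum_subtractf)
    also have "\<dots> = (\<Sum>s = 1..k. (a s - a (s - 1)) * poly h (\<alpha> s))"
      by (rule sum.cong) (auto simp: e_def ext_alpha_def algebra_simps)
    finally show ?thesis .
  qed
  have dg: "degree (pderiv h) \<le> r" using dh by (simp add: degree_pderiv)
  have o: "integral {-1..1} (\<lambda>x. poly (pderiv h) x * (poly [:0,1:] x - P x)) = 0"
    proof -
    have "degree [:0,1::real:] \<le> 1" by simp
    then show ?thesis using orth dg unfolding orth_condition_def P_def by blast
  qed
  have hint: "(poly h has_integral integral {-1..1} (poly h)) {-1..1}"
    by (intro integrable_integral integrable_continuous_real continuous_intros)
  have gint: "((\<lambda>x. F x - poly h x) has_integral (\<Sum>s<Suc k. T s) - integral {-1..1} (poly h)) {-1..1}"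
    by (intro has_integral_diff Fint hint)
  then have "integral {-1..1} (\<lambda>x. poly (pderiv h) x * (poly [:0,1:] x - P x)) = (\<Sum>s<Suc k. T s) - integral {-1..1} (poly h)"
    by (simp add: F_def integral_unique)
  then show "integral {-1..1} (poly h) = (\<Sum>s = 1..k. (a s - a (s - 1)) * poly h (\<alpha> s))"
    using o tele by simp
qed

end
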